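(* Let $R$ be a principal ideal domain and let $a\in R$ be nonzero. Assume that $a$ has a non-unit bounded factor, i.e. there exist $r,s,p\in R$ with $a=rps$ and $p$ a bounded non-unit. Then $a$ is c-irreducible if and only if $a$ is irreducible.
   Context: A principal ideal domain (PID) is a (not necessarily commutative) domain in which every left ideal and every right ideal is principal. An element $p$ is bounded if $Rp$ contains a nonzero two-sided ideal. A non-unit $a$ is irreducible if $a=bc$ implies $b$ or $c$ is a unit. Elements $b,c$ are similar if $R/Rb\cong R/Rc$ as left $R$-modules. A nonzero $a$ is c-reducible if $a=bb'=c'c$ for some non-units $b,b',c',c\in R$ with $b$ similar to $c$; an element that is not c-reducible is c-irreducible. *)

theory Defs
  imports Main
begin

text \<open>Noncommutative rings are modelled by the type class ring_1 (not necessarily commutative).\<close>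

definition is_unit :: "'a::ring_1 \<Rightarrow> bool" where
  "is_unit u \<longleftrightarrow> (\<exists>v. u * v = 1 \<and> v * u = 1)"

definition additive_subgroup :: "'a::ring_1 set \<Rightarrow> bool" where
  "additive_subgroup I \<longleftrightarrow> 0 \<in> I \<and> (\<forall>x\<in>I. \<forall>y\<in>I. x + y \<in> I) \<and> (\<forall>x\<in>I. - x \<in> I)"

definition left_ideal :: "'a::ring_1 set \<Rightarrow> bool" where
  "left_ideal I \<longleftrightarrow> additive_subgroup I \<and> (\<forall>r x. x \<in> I \<longrightarrow> r * x \<in> I)"

definition right_ideal :: "'a::ring_1 set \<Rightarrow> bool" where
  "right_ideal I \<longleftrightarrow> additive_subgroup I \<and> (\<forall>r x. x \<in> I \<longrightarrow> x * r \<in> I)"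

definition two_sided_ideal :: "'a::ring_1 set \<Rightarrow> bool" where
  "two_sided_ideal I \<longleftrightarrow> left_ideal I \<and> right_ideal I"

definition lprinc :: "'a::ring_1 \<Rightarrow> 'a set" where
  "lprinc b = {x * b | x. True}"

definition rprinc :: "'a::ring_1 \<Rightarrow> 'a set" where
  "rprinc b = {b * x | x. True}"

definition is_PID :: "'a::ring_1 itself \<Rightarrow> bool" where
  "is_PID (_::'a itself) \<longleftrightarrow>
     (0::'a) \<noteq> 1 \<and>
     (\<forall>x y::'a. x * y = 0 \<longrightarrow> x = 0 \<or> y = 0) \<and>
     (\<forall>I::'a set. left_ideal I \<longrightarrow> (\<exists>g. I = lprinc g)) \<and>
     (\<forall>I::'a set. right_ideal I \<longrightarrow> (\<exists>g. I = rprinc g))"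

definition bounded_elem :: "'a::ring_1 \<Rightarrow> bool" where
  "bounded_elem p \<longleftrightarrow> (\<exists>I. two_sided_ideal I \<and> I \<noteq> {0} \<and> I \<subseteq> lprinc p)"

definition irreducible_elem :: "'a::ring_1 \<Rightarrow> bool" where
  "irreducible_elem a \<longleftrightarrow> \<not> is_unit a \<and> (\<forall>b c. a = b * c \<longrightarrow> is_unit b \<or> is_unit c)"

text \<open>Similarity: R/Rb and R/Rc are isomorphic left R-modules.  Such an isomorphism
  is given by a left R-linear map f : R \<rightarrow> R (every left module map out of a
  cyclic quotient of R lifts to R) with f(x) \<in> Rc iff x \<in> Rb (well defined and
  injective on the quotient) and surjective modulo Rc.\<close>
definition similar :: "'a::ring_1 \<Rightarrow> 'a \<Rightarrow> bool" where
  "similar b c \<longleftrightarrow> (\<exists>f::'a \<Rightarrow> 'a.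
      (\<forall>x y. f (x + y) = f x + f y) \<and>
      (\<forall>r x. f (r * x) = r * f x) \<and>
      (\<forall>x. f x \<in> lprinc c \<longleftrightarrow> x \<in> lprinc b) \<and>
      (\<forall>y. \<exists>x. y - f x \<in> lprinc c))"

definition c_reducible :: "'a::ring_1 \<Rightarrow> bool" where
  "c_reducible a \<longleftrightarrow> a \<noteq> 0 \<and> (\<exists>b b' c' c. a = b * b' \<and> a = c' * c \<and>
      \<not> is_unit b \<and> \<not> is_unit b' \<and> \<not> is_unit c' \<and> \<not> is_unit c \<and> similar b c)"

definition c_irreducible :: "'a::ring_1 \<Rightarrow> bool" where
  "c_irreducible a \<longleftrightarrow> \<not> c_reducible a"

end

theory Submission
  imports Defs
begin

lemma lprinc_iff: "x \<in> lprinc b \<longleftrightarrow> (\<exists>k. x = k * b)"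
  by (auto simp: lprinc_def)
lemma rprinc_iff: "x \<in> rprinc b \<longleftrightarrow> (\<exists>k. x = b * k)"
  by (auto simp: rprinc_def)

lemma lprincI: "x = k * b \<Longrightarrow> x \<in> lprinc b"
  by (auto simp: lprinc_iff)
lemma rprincI: "x = b * k \<Longrightarrow> x \<in> rprinc b"
  by (auto simp: rprinc_iff)

lemma left_idealI:
  assumes "0 \<in> I" "\<And>x y. x \<in> I \<Longrightarrow> y \<in> I \<Longrightarrow> x + y \<in> I"
    "\<And>x. x \<in> I \<Longrightarrow> - x \<in> I" "\<And>r x. x \<in> I \<Longrightarrow> r * x \<in> I"
  shows "left_ideal I"
  using assms unfolding left_ideal_def additive_subgroup_def by blast

lemma right_idealI:
  assumes "0 \<in> I" "\<And>x y. x \<in> I \<Longrightarrow> y \<in> I \<Longrightarrow> x + y \<in> I"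
    "\<And>x. x \<in> I \<Longrightarrow> - x \<in> I" "\<And>r x. x \<in> I \<Longrightarrow> x * r \<in> I"
  shows "right_ideal I"
  using assms unfolding right_ideal_def additive_subgroup_def by blast

lemma left_idealD:
  assumes "left_ideal I"
  shows "0 \<in> I" "\<And>x y. x \<in> I \<Longrightarrow> y \<in> I \<Longrightarrow> x + y \<in> I"
    "\<And>x. x \<in> I \<Longrightarrow> - x \<in> I" "\<And>r x. x \<in> I \<Longrightarrow> r * x \<in> I"
  using assms unfolding left_ideal_def additive_subgroup_def by blast+

lemma left_ideal_diff: "left_ideal I \<Longrightarrow> x \<in> I \<Longrightarrow> y \<in> I \<Longrightarrow> x - y \<in> I"
  using left_idealD[of I] by (metis diff_conv_add_uminus)

lemma right_idealD:
  assumes "right_ideal I"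
  shows "0 \<in> I" "\<And>x y. x \<in> I \<Longrightarrow> y \<in> I \<Longrightarrow> x + y \<in> I"
    "\<And>x. x \<in> I \<Longrightarrow> - x \<in> I" "\<And>r x. x \<in> I \<Longrightarrow> x * r \<in> I"
  using assms unfolding right_ideal_def additive_subgroup_def by blast+

lemma left_ideal_lprinc: "left_ideal (lprinc b)"
proof (rule left_idealI)
  show "0 \<in> lprinc b" by (rule lprincI[of _ 0]) simp
  fix x y assume "x \<in> lprinc b" "y \<in> lprinc b"
  then obtain k l where "x = k * b" "y = l * b" by (auto simp: lprinc_iff)
  then show "x + y \<in> lprinc b" by (intro lprincI[of _ "k + l"]) (simp add: distrib_right)
next
  fix x assume "x \<in> lprinc b"
  then obtain k where "x = k * b" by (auto simp: lprinc_iff)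
  then show "- x \<in> lprinc b" by (intro lprincI[of _ "- k"]) simp
next
  fix r x assume "x \<in> lprinc b"
  then obtain k where "x = k * b" by (auto simp: lprinc_iff)
  then show "r * x \<in> lprinc b" by (intro lprincI[of _ "r * k"]) (simp add: mult.assoc)
qed

lemma right_ideal_rprinc: "right_ideal (rprinc b)"
proof (rule right_idealI)
  show "0 \<in> rprinc b" by (rule rprincI[of _ _ 0]) simp
  fix x y assume "x \<in> rprinc b" "y \<in> rprinc b"
  then obtain k l where "x = b * k" "y = b * l" by (auto simp: rprinc_iff)
  then show "x + y \<in> rprinc b" by (intro rprincI[of _ _ "k + l"]) (simp add: distrib_left)
next
  fix x assume "x \<in> rprinc b"
  then obtain k where "x = b * k" by (auto simp: rprinc_iff)
  then show "- x \<in> rprinc b" by (intro rprincI[of _ _ "- k"]) simp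
next
  fix r x assume "x \<in> rprinc b"
  then obtain k where "x = b * k" by (auto simp: rprinc_iff)
  then show "x * r \<in> rprinc b" by (intro rprincI[of _ _ "k * r"]) (simp add: mult.assoc)
qed

lemma lprinc_mult: "x \<in> lprinc b \<Longrightarrow> y * x \<in> lprinc b"
  using left_idealD(4)[OF left_ideal_lprinc] .
lemma lprinc_add: "x \<in> lprinc b \<Longrightarrow> y \<in> lprinc b \<Longrightarrow> x + y \<in> lprinc b"
  using left_idealD(2)[OF left_ideal_lprinc] .
lemma lprinc_diff: "x \<in> lprinc b \<Longrightarrow> y \<in> lprinc b \<Longrightarrow> x - y \<in> lprinc b"
  using left_ideal_diff[OF left_ideal_lprinc] .
lemma lprinc_self: "b \<in> lprinc b"
  by (rule lprincI[of _ 1]) simp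
lemma lprinc_0: "0 \<in> lprinc b"
  by (rule lprincI[of _ 0]) simp
lemma lprinc_trans: "x \<in> lprinc b \<Longrightarrow> b \<in> lprinc c \<Longrightarrow> x \<in> lprinc c"
  by (metis lprinc_iff mult.assoc)
lemma rprinc_trans: "x \<in> rprinc b \<Longrightarrow> b \<in> rprinc c \<Longrightarrow> x \<in> rprinc c"
  by (metis rprinc_iff mult.assoc)

definition inv_elem :: "'a::ring_1 \<Rightarrow> bool" where
  "inv_elem w \<longleftrightarrow> lprinc w = rprinc w"

lemma inv_elemD1: "inv_elem w \<Longrightarrow> \<exists>y. w * x = y * w"
  unfolding inv_elem_def by (metis lprinc_iff rprincI)
lemma inv_elemD2: "inv_elem w \<Longrightarrow> \<exists>y. x * w = w * y"
  unfolding inv_elem_def by (metis rprinc_iff lprincI)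

lemma inv_elemI: "(\<And>x. \<exists>y. w * x = y * w) \<Longrightarrow> (\<And>x. \<exists>y. x * w = w * y) \<Longrightarrow> inv_elem w"
  unfolding inv_elem_def
proof (intro equalityI subsetI)
  fix z assume A: "\<And>x. \<exists>y. w * x = y * w" and B: "\<And>x. \<exists>y. x * w = w * y"
  { assume "z \<in> lprinc w"
    then obtain k where "z = k * w" by (auto simp: lprinc_iff)
    moreover obtain y where "k * w = w * y" using B by blast
    ultimately show "z \<in> rprinc w" by (auto simp: rprinc_iff) }
  { assume "z \<in> rprinc w"
    then obtain k where "z = w * k" by (auto simp: rprinc_iff)
    moreover obtain y where "w * k = y * w" using A by blast
    ultimately show "z \<in> lprinc w" by (auto simp: lprinc_iff) }
qed

lemma inv_elem_power: assumes W: "inv_elem w" shows "inv_elem (w ^ n)"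
proof (induction n)
  case 0
  then show ?case by (intro inv_elemI) auto
next
  case (Suc n)
  show ?case
  proof (rule inv_elemI)
    fix x
    obtain y where y: "w ^ n * x = y * w ^ n" using inv_elemD1[OF Suc.IH] by blast
    obtain y' where y': "w * y = y' * w" using inv_elemD1[OF W] by blast
    have "w ^ Suc n * x = w * (w ^ n * x)" by (simp add: mult.assoc)
    also have "\<dots> = (w * y) * w ^ n" by (simp add: y mult.assoc)
    also have "\<dots> = y' * w ^ Suc n" by (simp add: y' mult.assoc)
    finally have "w ^ Suc n * x = y' * w ^ Suc n" .
    then show "\<exists>y. w ^ Suc n * x = y * w ^ Suc n" by blast
  next
    fix x
    obtain y where y: "x * w = w * y" using inv_elemD2[OF W] by blast
    obtain y' where y': "y * w ^ n = w ^ n * y'" using inv_elemD2[OF Suc.IH] by blast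
    have "x * w ^ Suc n = (x * w) * w ^ n" by (simp add: mult.assoc)
    also have "\<dots> = w * (y * w ^ n)" by (simp add: y mult.assoc)
    also have "\<dots> = w ^ Suc n * y'" by (simp add: y' mult.assoc)
    finally have "x * w ^ Suc n = w ^ Suc n * y'" .
    then show "\<exists>y. x * w ^ Suc n = w ^ Suc n * y" by blast
  qed
qed


definition lsum :: "'a::ring_1 \<Rightarrow> 'a \<Rightarrow> 'a set" where
  "lsum x p = {m * x + n * p | m n. True}"

lemma lsum_iff: "y \<in> lsum x p \<longleftrightarrow> (\<exists>m n. y = m * x + n * p)"
  by (auto simp: lsum_def)

lemma left_ideal_lsum: "left_ideal (lsum x p)"
proof (rule left_idealI)
  show "0 \<in> lsum x p" unfolding lsum_iff by (rule exI[of _ 0], rule exI[of _ 0]) simp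
next
  fix u v assume "u \<in> lsum x p" "v \<in> lsum x p"
  then obtain m n m' n' where "u = m * x + n * p" "v = m' * x + n' * p" by (auto simp: lsum_iff)
  then have "u + v = (m + m') * x + (n + n') * p" by (simp add: algebra_simps)
  then show "u + v \<in> lsum x p" by (auto simp: lsum_iff)
next
  fix u assume "u \<in> lsum x p"
  then obtain m n where "u = m * x + n * p" by (auto simp: lsum_iff)
  then have "- u = (- m) * x + (- n) * p" by (simp add: algebra_simps)
  then show "- u \<in> lsum x p" unfolding lsum_iff by blast
next
  fix r u assume "u \<in> lsum x p"
  then obtain m n where "u = m * x + n * p" by (auto simp: lsum_iff)
  then have "r * u = (r * m) * x + (r * n) * p" by (simp add: algebra_simps)
  then show "r * u \<in> lsum x p" by (auto simp: lsum_iff)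
qed

lemma acc_generic:
  assumes gen: "\<And>X. P X \<Longrightarrow> \<exists>g\<in>X. \<forall>Y. P Y \<longrightarrow> g \<in> Y \<longrightarrow> X \<subseteq> Y"
    and chain: "\<And>f::nat \<Rightarrow> 'a set. (\<And>n. P (f n)) \<Longrightarrow> (\<And>n. f n \<subseteq> f (Suc n)) \<Longrightarrow> P (\<Union> (range f))"
    and ne: "S \<noteq> {}" and SP: "\<And>X. X \<in> S \<Longrightarrow> P X"
  shows "\<exists>X\<in>S. \<forall>Y\<in>S. X \<subseteq> Y \<longrightarrow> Y = X"
proof (rule ccontr)
  assume "\<not> ?thesis"
  then have step: "\<And>X. X \<in> S \<Longrightarrow> \<exists>Y. Y \<in> S \<and> X \<subseteq> Y \<and> Y \<noteq> X" by blast
  define f where "f = rec_nat (SOME X. X \<in> S) (\<lambda>n X. SOME Y. Y \<in> S \<and> X \<subseteq> Y \<and> Y \<noteq> X)"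
  have f0: "f 0 = (SOME X. X \<in> S)" by (simp add: f_def)
  have fS: "f (Suc n) = (SOME Y. Y \<in> S \<and> f n \<subseteq> Y \<and> Y \<noteq> f n)" for n by (simp add: f_def)
  have inS: "f n \<in> S" for n
  proof (induction n)
    case 0 then show ?case using ne f0 by (metis ex_in_conv someI_ex)
  next
    case (Suc n) then show ?case using step[OF Suc] fS[of n] by (metis (mono_tags, lifting) someI_ex)
  qed
  have fstep: "f n \<subseteq> f (Suc n) \<and> f (Suc n) \<noteq> f n" for n
    using someI_ex[OF step[OF inS[of n]]] fS[of n] by simp
  have "P (\<Union> (range f))" by (rule chain) (use inS SP fstep in auto)
  then obtain g where g: "g \<in> \<Union> (range f)" "\<And>Y. P Y \<Longrightarrow> g \<in> Y \<Longrightarrow> \<Union> (range f) \<subseteq> Y"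
    using gen by blast
  then obtain k where "g \<in> f k" by blast
  then have "\<Union> (range f) \<subseteq> f k" using g(2) SP inS by blast
  then have "f (Suc k) \<subseteq> f k" by blast
  then show False using fstep[of k] by blast
qed

lemma chain_union_left_ideal:
  assumes "\<And>n. left_ideal (f n)" "\<And>n::nat. f n \<subseteq> f (Suc n)"
  shows "left_ideal (\<Union> (range f))"
proof -
  have mono: "i \<le> j \<Longrightarrow> f i \<subseteq> f j" for i j using lift_Suc_mono_le[of f, OF assms(2)] by blast
  show ?thesis
  proof (rule left_idealI)
    show "0 \<in> \<Union> (range f)" using left_idealD(1)[OF assms(1)[of 0]] by blast
  next
    fix x y assume "x \<in> \<Union> (range f)" "y \<in> \<Union> (range f)"
    then obtain i j where "x \<in> f i" "y \<in> f j" by blast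
    then have "x \<in> f (max i j)" "y \<in> f (max i j)" using mono[of i "max i j"] mono[of j "max i j"] by auto
    then show "x + y \<in> \<Union> (range f)" using left_idealD(2)[OF assms(1)] by blast
  next
    fix x assume "x \<in> \<Union> (range f)" then show "- x \<in> \<Union> (range f)" using left_idealD(3)[OF assms(1)] by blast
  next
    fix r x assume "x \<in> \<Union> (range f)" then show "r * x \<in> \<Union> (range f)" using left_idealD(4)[OF assms(1)] by blast
  qed
qed

lemma chain_union_right_ideal:
  assumes "\<And>n. right_ideal (f n)" "\<And>n::nat. f n \<subseteq> f (Suc n)"
  shows "right_ideal (\<Union> (range f))"
proof -
  have mono: "i \<le> j \<Longrightarrow> f i \<subseteq> f j" for i j using lift_Suc_mono_le[of f, OF assms(2)] by blast
  show ?thesis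
  proof (rule right_idealI)
    show "0 \<in> \<Union> (range f)" using right_idealD(1)[OF assms(1)[of 0]] by blast
  next
    fix x y assume "x \<in> \<Union> (range f)" "y \<in> \<Union> (range f)"
    then obtain i j where "x \<in> f i" "y \<in> f j" by blast
    then have "x \<in> f (max i j)" "y \<in> f (max i j)" using mono[of i "max i j"] mono[of j "max i j"] by auto
    then show "x + y \<in> \<Union> (range f)" using right_idealD(2)[OF assms(1)] by blast
  next
    fix x assume "x \<in> \<Union> (range f)" then show "- x \<in> \<Union> (range f)" using right_idealD(3)[OF assms(1)] by blast
  next
    fix r x assume "x \<in> \<Union> (range f)" then show "x * r \<in> \<Union> (range f)" using right_idealD(4)[OF assms(1)] by blast
  qed
qed

lemma J_left_ideal: assumes zi: "inv_elem z" shows "left_ideal {x. z ^ n * x \<in> lprinc a}" (is "left_ideal ?J")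
proof (rule left_idealI)
  show "0 \<in> ?J" by (simp add:  lprinc_0)
next
  fix x y assume "x \<in> ?J" "y \<in> ?J" then show "x + y \<in> ?J"
    by (simp add:  distrib_left lprinc_add)
next
  fix x assume "x \<in> ?J" then show "- x \<in> ?J"
    using left_idealD(3)[OF left_ideal_lprinc] by (simp add: )
next
  fix r x assume "x \<in> ?J"
  obtain r' where r': "z ^ n * r = r' * z ^ n" using inv_elemD1[OF inv_elem_power[OF zi]] by blast
  have "z ^ n * (r * x) = r' * (z ^ n * x)" by (simp add: r' flip: mult.assoc)
  then show "r * x \<in> ?J" using \<open>x \<in> ?J\<close> lprinc_mult by (simp add: )
qed

lemma I_left_ideal: assumes zi: "inv_elem z" shows "left_ideal {z ^ n * y + k * a | y k. True}" (is "left_ideal ?I")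
proof (rule left_idealI)
  show "0 \<in> ?I" by (rule CollectI, rule exI[of _ 0], rule exI[of _ 0]) simp
next
  fix x y assume "x \<in> ?I" "y \<in> ?I"
  then obtain y1 k1 y2 k2 where "x = z ^ n * y1 + k1 * a" "y = z ^ n * y2 + k2 * a" by (auto simp: )
  then have "x + y = z ^ n * (y1 + y2) + (k1 + k2) * a" by (simp add: algebra_simps)
  then show "x + y \<in> ?I" by blast
next
  fix x assume "x \<in> ?I"
  then obtain y1 k1 where "x = z ^ n * y1 + k1 * a" by (auto simp: )
  then have "- x = z ^ n * (- y1) + (- k1) * a" by (simp add: algebra_simps)
  then show "- x \<in> ?I" by blast
next
  fix r x assume "x \<in> ?I"
  then obtain y1 k1 where x: "x = z ^ n * y1 + k1 * a" by (auto simp: )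
  obtain r' where r': "r * z ^ n = z ^ n * r'" using inv_elemD2[OF inv_elem_power[OF zi]] by blast
  have "r * x = (r * z ^ n) * y1 + (r * k1) * a" by (simp add: x algebra_simps)
  also have "\<dots> = z ^ n * (r' * y1) + (r * k1) * a" by (simp add: r' mult.assoc)
  finally show "r * x \<in> ?I" by blast
qed


lemma left_ideal_Int: "left_ideal A \<Longrightarrow> left_ideal B \<Longrightarrow> left_ideal (A \<inter> B)"
  unfolding left_ideal_def additive_subgroup_def by blast

lemma left_ideal_UNIV: "left_ideal UNIV"
  unfolding left_ideal_def additive_subgroup_def by blast

lemma K_left_ideal: "left_ideal {x. x * y \<in> lprinc b}"
proof (rule left_idealI)
  show "0 \<in> {x. x * y \<in> lprinc b}" by (simp add: lprinc_0)
next
  fix u v assume "u \<in> {x. x * y \<in> lprinc b}" "v \<in> {x. x * y \<in> lprinc b}"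
  then show "u + v \<in> {x. x * y \<in> lprinc b}" by (simp add: distrib_right lprinc_add)
next
  fix u assume "u \<in> {x. x * y \<in> lprinc b}"
  then show "- u \<in> {x. x * y \<in> lprinc b}" using left_idealD(3)[OF left_ideal_lprinc] by simp
next
  fix r u assume "u \<in> {x. x * y \<in> lprinc b}"
  then show "r * u \<in> {x. x * y \<in> lprinc b}" using lprinc_mult by (simp add: mult.assoc)
qed

context
  fixes TT :: "'a::ring_1 itself"
  assumes P: "is_PID TYPE('a)"
begin

lemma nzd: "(x::'a) * y = 0 \<Longrightarrow> x = 0 \<or> y = 0"
  using P unfolding is_PID_def by blast
lemma zero_ne_one': "(0::'a) \<noteq> 1"
  using P unfolding is_PID_def by blast
lemma lgen: "left_ideal (I::'a set) \<Longrightarrow> \<exists>g. I = lprinc g"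
  using P unfolding is_PID_def by blast
lemma rgen: "right_ideal (I::'a set) \<Longrightarrow> \<exists>g. I = rprinc g"
  using P unfolding is_PID_def by blast

lemma cancel_r: "(x::'a) * y = x' * y \<Longrightarrow> y \<noteq> 0 \<Longrightarrow> x = x'"
proof -
  assume "x * y = x' * y" "y \<noteq> 0"
  then have "(x - x') * y = 0" by (simp add: left_diff_distrib)
  then show "x = x'" using nzd \<open>y \<noteq> 0\<close> by fastforce
qed

lemma cancel_l: "(y::'a) * x = y * x' \<Longrightarrow> y \<noteq> 0 \<Longrightarrow> x = x'"
proof -
  assume "y * x = y * x'" "y \<noteq> 0"
  then have "y * (x - x') = 0" by (simp add: right_diff_distrib)
  then show "x = x'" using nzd \<open>y \<noteq> 0\<close> by fastforce
qed

lemma rinv_unit: "(u::'a) * v = 1 \<Longrightarrow> is_unit u \<and> is_unit v"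
proof -
  assume uv: "u * v = 1"
  have "v \<noteq> 0" using uv zero_ne_one' by auto
  have "(v * u) * v = 1 * v" by (simp add: mult.assoc uv)
  then have "v * u = 1" using cancel_r \<open>v \<noteq> 0\<close> by blast
  then show ?thesis using uv unfolding is_unit_def by blast
qed

lemma unit_iff_l: "is_unit (b::'a) \<longleftrightarrow> 1 \<in> lprinc b"
  unfolding lprinc_iff using rinv_unit unfolding is_unit_def by metis

lemma unit_iff_r: "is_unit (b::'a) \<longleftrightarrow> 1 \<in> rprinc b"
  unfolding rprinc_iff using rinv_unit unfolding is_unit_def by metis

lemma unit_multD: "is_unit ((x::'a) * y) \<Longrightarrow> is_unit x \<and> is_unit y"
proof -
  assume "is_unit (x * y)"
  then obtain v where v: "x * y * v = 1" "v * (x * y) = 1" unfolding is_unit_def by blast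
  have "x * (y * v) = 1" using v by (simp add: mult.assoc)
  moreover have "(v * x) * y = 1" using v by (simp add: mult.assoc)
  ultimately show ?thesis using rinv_unit by blast
qed

lemma not_unit_0: "\<not> is_unit (0::'a)"
  unfolding is_unit_def using zero_ne_one' by auto

lemma unit_mult: "is_unit (x::'a) \<Longrightarrow> is_unit y \<Longrightarrow> is_unit (x * y)"
proof -
  assume "is_unit x" "is_unit y"
  then obtain u v where "x * u = 1" "y * v = 1" unfolding is_unit_def by blast
  then have "(x * y) * (v * u) = 1" by (simp add: mult.assoc) (simp flip: mult.assoc)
  then show ?thesis using rinv_unit by blast
qed

lemma irr_max:
  assumes irr: "irreducible_elem (p::'a)" and x: "x \<notin> lprinc p"
  shows "\<exists>\<mu> \<nu>. 1 = \<mu> * x + \<nu> * p"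
proof -
  obtain d where d: "lsum x p = lprinc d" using lgen[OF left_ideal_lsum] by blast
  have "p \<in> lsum x p" unfolding lsum_iff by (rule exI[of _ 0], rule exI[of _ 1]) simp
  then obtain v where v: "p = v * d" using d by (auto simp: lprinc_iff)
  have "x \<in> lsum x p" unfolding lsum_iff by (rule exI[of _ 1], rule exI[of _ 0]) simp
  then obtain k where k: "x = k * d" using d by (auto simp: lprinc_iff)
  from irr v have "is_unit v \<or> is_unit d" unfolding irreducible_elem_def by blast
  then show ?thesis
  proof
    assume "is_unit v"
    then obtain v' where "v' * v = 1" unfolding is_unit_def by blast
    then have "x = (k * v') * p" using k v by (simp add: mult.assoc flip: mult.assoc[of v' v])
    then show ?thesis using x by (auto simp: lprinc_iff)
  next
    assume "is_unit d"
    then have "1 \<in> lprinc d" using unit_iff_l by blast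
    then have "1 \<in> lsum x p" using d by simp
    then show ?thesis unfolding lsum_iff .
  qed
qed

lemma lacc: "S \<noteq> {} \<Longrightarrow> (\<And>X. X \<in> S \<Longrightarrow> left_ideal (X::'a set)) \<Longrightarrow> \<exists>X\<in>S. \<forall>Y\<in>S. X \<subseteq> Y \<longrightarrow> Y = X"
proof (rule acc_generic[where P = left_ideal])
  fix X :: "'a set" assume "left_ideal X"
  then obtain g where "X = lprinc g" using lgen by blast
  moreover have "\<forall>Y. left_ideal Y \<longrightarrow> g \<in> Y \<longrightarrow> lprinc g \<subseteq> Y"
    using left_idealD(4) by (auto simp: lprinc_iff)
  ultimately show "\<exists>g\<in>X. \<forall>Y. left_ideal Y \<longrightarrow> g \<in> Y \<longrightarrow> X \<subseteq> Y"
    using lprinc_self by blast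
next
  fix f :: "nat \<Rightarrow> 'a set" assume "\<And>n. left_ideal (f n)" "\<And>n. f n \<subseteq> f (Suc n)"
  then show "left_ideal (\<Union> (range f))" by (rule chain_union_left_ideal)
qed

lemma racc: "S \<noteq> {} \<Longrightarrow> (\<And>X. X \<in> S \<Longrightarrow> right_ideal (X::'a set)) \<Longrightarrow> \<exists>X\<in>S. \<forall>Y\<in>S. X \<subseteq> Y \<longrightarrow> Y = X"
proof (rule acc_generic[where P = right_ideal])
  fix X :: "'a set" assume "right_ideal X"
  then obtain g where "X = rprinc g" using rgen by blast
  moreover have "g \<in> rprinc g" by (rule rprincI[of _ _ 1]) simp
  ultimately show "\<exists>g\<in>X. \<forall>Y. right_ideal Y \<longrightarrow> g \<in> Y \<longrightarrow> X \<subseteq> Y"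
    using right_idealD(4) by (metis rprinc_iff subsetI)
next
  fix f :: "nat \<Rightarrow> 'a set" assume "\<And>n. right_ideal (f n)" "\<And>n. f n \<subseteq> f (Suc n)"
  then show "right_ideal (\<Union> (range f))" by (rule chain_union_right_ideal)
qed


lemma lprinc_sub: "b \<in> lprinc c \<Longrightarrow> lprinc b \<subseteq> lprinc c"
  using lprinc_trans by blast
lemma rprinc_sub: "b \<in> rprinc c \<Longrightarrow> rprinc b \<subseteq> rprinc c"
  using rprinc_trans by blast
lemma rprinc_self: "b \<in> rprinc b"
  by (rule rprincI[of _ _ 1]) simp

lemma ldcc:
  assumes w0: "(w::'a) \<noteq> 0" and ne: "S \<noteq> {}" and SX: "\<And>X. X \<in> S \<Longrightarrow> left_ideal X \<and> w \<in> X"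
  shows "\<exists>X\<in>S. \<forall>Y\<in>S. Y \<subseteq> X \<longrightarrow> Y = X"
proof -
  define T where "T = {rprinc e | e. \<exists>X\<in>S. \<exists>d. X = lprinc d \<and> w = e * d}"
  obtain X1 where "X1 \<in> S" using ne by blast
  then obtain d1 where d1: "X1 = lprinc d1" using SX lgen by blast
  have "w \<in> lprinc d1" using SX \<open>X1 \<in> S\<close> d1 by blast
  then obtain e1 where "w = e1 * d1" by (auto simp: lprinc_iff)
  then have "rprinc e1 \<in> T" using \<open>X1 \<in> S\<close> d1 unfolding T_def by blast
  then have Tne: "T \<noteq> {}" by blast
  have "\<And>Z. Z \<in> T \<Longrightarrow> right_ideal Z" using right_ideal_rprinc by (auto simp: T_def)
  then obtain Z0 where Z0: "Z0 \<in> T" "\<forall>Y\<in>T. Z0 \<subseteq> Y \<longrightarrow> Y = Z0" using racc[OF Tne] by blast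
  then obtain e0 X0 d0 where ed0: "Z0 = rprinc e0" "X0 \<in> S" "X0 = lprinc d0" "w = e0 * d0"
    unfolding T_def by blast
  have d00: "d0 \<noteq> 0" and e00: "e0 \<noteq> 0" using w0 ed0(4) by auto
  show ?thesis
  proof (intro bexI[OF _ ed0(2)] ballI impI)
    fix Y assume Y: "Y \<in> S" "Y \<subseteq> X0"
    obtain d where Yd: "Y = lprinc d" using SX[OF Y(1)] lgen by blast
    obtain e where e: "w = e * d" using SX[OF Y(1)] Yd by (auto simp: lprinc_iff)
    have "d \<in> X0" using Y(2) Yd lprinc_self by blast
    then obtain v where v: "d = v * d0" using ed0(3) by (auto simp: lprinc_iff)
    have "e0 * d0 = (e * v) * d0" using ed0(4) e v by (simp add: mult.assoc)
    then have e0ev: "e0 = e * v" using cancel_r d00 by blast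
    have eT: "rprinc e \<in> T" unfolding T_def using Y(1) Yd e by blast
    have "e0 \<in> rprinc e" using e0ev by (auto simp: rprinc_iff)
    then have "Z0 \<subseteq> rprinc e" using ed0(1) rprinc_sub by blast
    then have "rprinc e = Z0" using Z0(2) eT by blast
    then have "e \<in> rprinc e0" using ed0(1) rprinc_self by blast
    then obtain u where u: "e = e0 * u" by (auto simp: rprinc_iff)
    have "e0 * 1 = e0 * (u * v)" using e0ev u by (simp add: mult.assoc)
    then have "u * v = 1" using cancel_l e00 by metis
    then have "is_unit v" using rinv_unit by blast
    then obtain v' where v': "v' * v = 1" unfolding is_unit_def by blast
    have "d0 = v' * d" using v v' by (simp flip: mult.assoc)
    then have "d0 \<in> Y" using Yd by (auto simp: lprinc_iff)
    then have "X0 \<subseteq> Y" using ed0(3) SX[OF Y(1)] left_idealD(4) by (auto simp: lprinc_iff)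
    then show "Y = X0" using Y(2) by blast
  qed
qed

lemma irr_right_factor:
  assumes a0: "(a::'a) \<noteq> 0" and au: "\<not> is_unit a"
  shows "\<exists>b c. a = b * c \<and> irreducible_elem c"
proof -
  define S where "S = {lprinc c | c. a \<in> lprinc c \<and> \<not> is_unit c}"
  have "lprinc a \<in> S" unfolding S_def using au lprinc_self by blast
  then have ne: "S \<noteq> {}" by blast
  have "\<And>X. X \<in> S \<Longrightarrow> left_ideal X" using left_ideal_lprinc by (auto simp: S_def)
  then obtain X where X: "X \<in> S" "\<forall>Y\<in>S. X \<subseteq> Y \<longrightarrow> Y = X" using lacc[OF ne] by blast
  then obtain c where c: "X = lprinc c" "a \<in> lprinc c" "\<not> is_unit c" unfolding S_def by blast
  then obtain b where ab: "a = b * c" by (auto simp: lprinc_iff)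
  have c0: "c \<noteq> 0" using a0 ab by auto
  have "irreducible_elem c" unfolding irreducible_elem_def
  proof (intro conjI allI impI)
    show "\<not> is_unit c" by (rule c(3))
    fix x y assume cxy: "c = x * y"
    show "is_unit x \<or> is_unit y"
    proof (rule ccontr)
      assume nu: "\<not> (is_unit x \<or> is_unit y)"
      have "c \<in> lprinc y" using cxy by (auto simp: lprinc_iff)
      then have sub: "lprinc c \<subseteq> lprinc y" by (rule lprinc_sub)
      have "lprinc y \<in> S" unfolding S_def using sub c(2) nu by blast
      then have "lprinc y = lprinc c" using X(2) sub c(1) by blast
      then have "y \<in> lprinc c" using lprinc_self by blast
      then obtain u where u: "y = u * c" by (auto simp: lprinc_iff)
      have y0: "y \<noteq> 0" using c0 cxy by auto
      have "1 * y = (u * x) * y" using u cxy by (metis mult.assoc mult_1_left)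
      then have "u * x = 1" using cancel_r y0 by metis
      then show False using rinv_unit nu by blast
    qed
  qed
  then show ?thesis using ab by blast
qed

lemma irr_left_factor:
  assumes a0: "(a::'a) \<noteq> 0" and au: "\<not> is_unit a"
  shows "\<exists>b c. a = b * c \<and> irreducible_elem b"
proof -
  define S where "S = {rprinc b | b. a \<in> rprinc b \<and> \<not> is_unit b}"
  have "rprinc a \<in> S" unfolding S_def using au rprinc_self by blast
  then have ne: "S \<noteq> {}" by blast
  have "\<And>X. X \<in> S \<Longrightarrow> right_ideal X" using right_ideal_rprinc by (auto simp: S_def)
  then obtain X where X: "X \<in> S" "\<forall>Y\<in>S. X \<subseteq> Y \<longrightarrow> Y = X" using racc[OF ne] by blast
  then obtain b where b: "X = rprinc b" "a \<in> rprinc b" "\<not> is_unit b" unfolding S_def by blast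
  then obtain c where ab: "a = b * c" by (auto simp: rprinc_iff)
  have b0: "b \<noteq> 0" using a0 ab by auto
  have "irreducible_elem b" unfolding irreducible_elem_def
  proof (intro conjI allI impI)
    show "\<not> is_unit b" by (rule b(3))
    fix x y assume bxy: "b = x * y"
    show "is_unit x \<or> is_unit y"
    proof (rule ccontr)
      assume nu: "\<not> (is_unit x \<or> is_unit y)"
      have "b \<in> rprinc x" using bxy by (auto simp: rprinc_iff)
      then have sub: "rprinc b \<subseteq> rprinc x" by (rule rprinc_sub)
      have "rprinc x \<in> S" unfolding S_def using sub b(2) nu by blast
      then have "rprinc x = rprinc b" using X(2) sub b(1) by blast
      then have "x \<in> rprinc b" using rprinc_self by blast
      then obtain u where u: "x = b * u" by (auto simp: rprinc_iff)
      have x0: "x \<noteq> 0" using b0 bxy by auto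
      have "x * 1 = x * (y * u)" using u bxy by (metis mult.assoc mult_1_right)
      then have "y * u = 1" using cancel_l x0 by metis
      then show False using rinv_unit nu by blast
    qed
  qed
  then show ?thesis using ab by blast
qed

lemma inv_gen:
  assumes W: "two_sided_ideal (W::'a set)" "W \<noteq> {0}"
  shows "\<exists>w. w \<noteq> 0 \<and> W = lprinc w \<and> inv_elem w"
proof -
  have WL: "left_ideal W" and WR: "right_ideal W" using W(1) unfolding two_sided_ideal_def by auto
  obtain g where g: "W = lprinc g" using lgen[OF WL] by blast
  obtain h where h: "W = rprinc h" using rgen[OF WR] by blast
  have g0: "g \<noteq> 0"
  proof
    assume "g = 0" then have "W = {0}" using g by (auto simp: lprinc_iff)
    then show False using W(2) by blast
  qed
  have "h \<in> W" using h rprinc_self by blast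
  then obtain v where v: "h = v * g" using g by (auto simp: lprinc_iff)
  have v0: "v \<noteq> 0"
  proof
    assume "v = 0" then have "W = {0}" using h v by (auto simp: rprinc_iff)
    then show False using W(2) by blast
  qed
  have gW: "g \<in> W" using g lprinc_self by blast
  have "inv_elem g"
  proof (rule inv_elemI)
    fix x
    have "g * x \<in> W" using right_idealD(4)[OF WR gW] .
    then show "\<exists>y. g * x = y * g" using g by (auto simp: lprinc_iff)
  next
    fix x
    have "(v * x) * g \<in> W" using left_idealD(4)[OF WL gW] .
    then obtain y where "(v * x) * g = h * y" using h by (auto simp: rprinc_iff)
    then have "v * (x * g) = v * (g * y)" using v by (simp add: mult.assoc)
    then have "x * g = g * y" using cancel_l v0 by blast
    then show "\<exists>y. x * g = g * y" by blast
  qed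
  then show ?thesis using g g0 by blast
qed

lemma fitting:
  assumes a0: "(a::'a) \<noteq> 0" and zi: "inv_elem z"
  shows "\<exists>N\<ge>1. (\<forall>x y k. z ^ N * x \<in> lprinc a \<longrightarrow> x = z ^ N * y + k * a \<longrightarrow> x \<in> lprinc a)
           \<and> (\<forall>m. \<exists>y. z ^ N * (m - z ^ N * y) \<in> lprinc a)"
proof -
  define J where "J n = {x. z ^ n * x \<in> lprinc a}" for n
  define I where "I n = {z ^ n * y + k * a | y k. True}" for n
  have Jl: "left_ideal (J n)" for n unfolding J_def by (rule J_left_ideal[OF zi])
  have Jmono: "J n \<subseteq> J (Suc n)" for n
    by (auto simp: J_def mult.assoc lprinc_mult)
  have Il: "left_ideal (I n)" for n unfolding I_def by (rule I_left_ideal[OF zi])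
  have Imono: "I (Suc n) \<subseteq> I n" for n
  proof
    fix x assume "x \<in> I (Suc n)"
    then obtain y1 k1 where "x = z ^ Suc n * y1 + k1 * a" by (auto simp: I_def)
    moreover have "z ^ Suc n * y1 = z ^ n * (z * y1)" by (simp only: power_Suc2 mult.assoc)
    ultimately have "x = z ^ n * (z * y1) + k1 * a" by simp
    then show "x \<in> I n" unfolding I_def by blast
  qed
  have aI: "a \<in> I n" for n
    unfolding I_def by (rule CollectI, rule exI[of _ 0], rule exI[of _ 1]) simp
  obtain N1 where N1: "\<forall>Y\<in>range J. J N1 \<subseteq> Y \<longrightarrow> Y = J N1"
    using lacc[of "range J"] Jl by blast
  have JN1: "m \<ge> N1 \<Longrightarrow> J m = J N1" for m
    using N1 lift_Suc_mono_le[of J, OF Jmono] by blast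
  obtain N2 where N2: "\<forall>Y\<in>range I. Y \<subseteq> I N2 \<longrightarrow> Y = I N2"
    using ldcc[OF a0, of "range I"] Il aI by blast
  have IN2: "m \<ge> N2 \<Longrightarrow> I m = I N2" for m
    using N2 lift_Suc_antimono_le[of I, OF Imono] by blast
  define N where "N = Suc (max N1 N2)"
  have JJ: "J (N + N) = J N" and II: "I (N + N) = I N"
    using JN1[of N] JN1[of "N + N"] IN2[of N] IN2[of "N + N"] by (auto simp: N_def)
  have P1: "\<forall>x y k. z ^ N * x \<in> lprinc a \<longrightarrow> x = z ^ N * y + k * a \<longrightarrow> x \<in> lprinc a"
  proof (intro allI impI)
    fix x y k assume zx: "z ^ N * x \<in> lprinc a" and x: "x = z ^ N * y + k * a"
    have "z ^ N * x = z ^ (N + N) * y + (z ^ N * k) * a"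
      by (simp add: x distrib_left power_add mult.assoc)
    then have "z ^ (N + N) * y = z ^ N * x - (z ^ N * k) * a" by (simp add: algebra_simps)
    moreover have "(z ^ N * k) * a \<in> lprinc a" by (rule lprincI) (rule refl)
    ultimately have "z ^ (N + N) * y \<in> lprinc a" using zx lprinc_diff by simp
    then have "y \<in> J N" using JJ by (auto simp: J_def)
    then have "z ^ N * y \<in> lprinc a" by (simp add: J_def)
    then show "x \<in> lprinc a" using x lprinc_add lprincI by blast
  qed
  have P2: "\<forall>m. \<exists>y. z ^ N * (m - z ^ N * y) \<in> lprinc a"
  proof
    fix m
    have "z ^ N * m \<in> I N" unfolding I_def by (rule CollectI, rule exI[of _ m], rule exI[of _ 0]) simp
    then have "z ^ N * m \<in> I (N + N)" using II by simp
    then obtain y k where yk: "z ^ N * m = z ^ (N + N) * y + k * a" by (auto simp: I_def)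
    have "z ^ N * (m - z ^ N * y) = k * a"
      by (simp add: right_diff_distrib yk power_add mult.assoc)
    then show "\<exists>y. z ^ N * (m - z ^ N * y) \<in> lprinc a" using lprincI by blast
  qed
  have "N \<ge> 1" by (simp add: N_def)
  then show ?thesis using P1 P2 by blast
qed

lemma unit_linv: "is_unit (e::'a) \<Longrightarrow> \<exists>e'. e' * e = 1"
  unfolding is_unit_def by blast

lemma decomp_c_red:
  assumes a0: "(a::'a) \<noteq> 0" and JL: "left_ideal J" and IL: "left_ideal I"
    and aJ: "a \<in> J" and aI: "a \<in> I" and cap: "\<And>x. x \<in> J \<Longrightarrow> x \<in> I \<Longrightarrow> x \<in> lprinc a"
    and sum: "\<And>m. \<exists>j\<in>J. \<exists>i\<in>I. m = j + i"
    and x0J: "x0 \<in> J" and x0a: "x0 \<notin> lprinc a" and x1J: "x1 \<notin> J"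
  shows "c_reducible a"
proof -
  obtain d where Jd: "J = lprinc d" using lgen[OF JL] by blast
  obtain d' where Id: "I = lprinc d'" using lgen[OF IL] by blast
  obtain e where ae: "a = e * d" using aJ Jd by (auto simp: lprinc_iff)
  obtain e' where ae': "a = e' * d'" using aI Id by (auto simp: lprinc_iff)
  have d0: "d \<noteq> 0" using a0 ae by auto
  have sim: "similar e d'" unfolding similar_def
  proof (intro exI[of _ "\<lambda>x. x * d"] conjI allI)
    fix x y show "(x + y) * d = x * d + y * d" by (simp add: distrib_right)
  next
    fix r x show "(r * x) * d = r * (x * d)" by (simp add: mult.assoc)
  next
    fix x show "(x * d \<in> lprinc d') = (x \<in> lprinc e)"
    proof
      assume "x * d \<in> lprinc d'"
      moreover have "x * d \<in> J" using Jd by (auto simp: lprinc_iff)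
      ultimately have "x * d \<in> lprinc a" using cap Id by blast
      then obtain k where "x * d = k * a" by (auto simp: lprinc_iff)
      then have "x * d = (k * e) * d" using ae by (simp add: mult.assoc)
      then have "x = k * e" using cancel_r d0 by blast
      then show "x \<in> lprinc e" by (auto simp: lprinc_iff)
    next
      assume "x \<in> lprinc e"
      then obtain k where "x = k * e" by (auto simp: lprinc_iff)
      then have "x * d = k * a" using ae by (simp add: mult.assoc)
      then have "x * d \<in> I" using aI left_idealD(4)[OF IL] by simp
      then show "x * d \<in> lprinc d'" using Id by simp
    qed
  next
    fix y
    obtain j i where ji: "j \<in> J" "i \<in> I" "y = j + i" using sum by blast
    then obtain x where "j = x * d" using Jd by (auto simp: lprinc_iff)
    then have "y - x * d = i" using ji by simp
    then show "\<exists>x. y - x * d \<in> lprinc d'" using ji(2) Id by blast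
  qed
  have nue: "\<not> is_unit e"
  proof
    assume "is_unit e"
    then obtain e'' where "e'' * e = 1" using unit_linv by blast
    then have "d = e'' * a" using ae by (simp flip: mult.assoc)
    moreover obtain k where "x0 = k * d" using x0J Jd by (auto simp: lprinc_iff)
    ultimately have "x0 = (k * e'') * a" by (simp add: mult.assoc)
    then show False using x0a by (auto simp: lprinc_iff)
  qed
  have nud: "\<not> is_unit d"
  proof
    assume "is_unit d"
    then have "1 \<in> J" using Jd unit_iff_l by blast
    then have "x1 * 1 \<in> J" using left_idealD(4)[OF JL] by blast
    then show False using x1J by simp
  qed
  have nud': "\<not> is_unit d'"
  proof
    assume "is_unit d'"
    then have "1 \<in> I" using Id unit_iff_l by blast
    then have "x0 * 1 \<in> I" using left_idealD(4)[OF IL] by blast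
    then show False using cap x0J x0a by simp
  qed
  have nue': "\<not> is_unit e'"
  proof
    assume "is_unit e'"
    then obtain e'' where "e'' * e' = 1" using unit_linv by blast
    then have "d' = e'' * a" using ae' by (simp flip: mult.assoc)
    obtain j i where ji: "j \<in> J" "i \<in> I" "x1 = j + i" using sum by blast
    obtain k where "i = k * d'" using ji(2) Id by (auto simp: lprinc_iff)
    then have "i = (k * e'') * a" using \<open>d' = e'' * a\<close> by (simp add: mult.assoc)
    then have "i \<in> J" using aJ left_idealD(4)[OF JL] by simp
    then have "x1 \<in> J" using ji left_idealD(2)[OF JL] by simp
    then show False using x1J by simp
  qed
  show ?thesis unfolding c_reducible_def using a0 ae ae' sim nue nud nud' nue' by blast
qed

lemma fit_cases:
  assumes a0: "(a::'a) \<noteq> 0" and zi: "inv_elem z"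
  shows "c_reducible a \<or> (\<exists>N\<ge>1. z ^ N \<in> lprinc a) \<or>
    (\<exists>N\<ge>1. (\<forall>x. z ^ N * x \<in> lprinc a \<longrightarrow> x \<in> lprinc a) \<and> (\<forall>m. \<exists>y. z ^ N * (m - z ^ N * y) \<in> lprinc a))"
proof -
  obtain N where N: "N \<ge> 1"
    "\<forall>x y k. z ^ N * x \<in> lprinc a \<longrightarrow> x = z ^ N * y + k * a \<longrightarrow> x \<in> lprinc a"
    "\<forall>m. \<exists>y. z ^ N * (m - z ^ N * y) \<in> lprinc a"
    using fitting[OF a0 zi] by blast
  define J where "J = {x. z ^ N * x \<in> lprinc a}"
  define I where "I = {z ^ N * y + k * a | y k. True}"
  have JL: "left_ideal J" unfolding J_def by (rule J_left_ideal[OF zi])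
  have IL: "left_ideal I" unfolding I_def by (rule I_left_ideal[OF zi])
  have aJ: "a \<in> J" unfolding J_def using lprinc_self lprinc_mult by blast
  have aI: "a \<in> I" unfolding I_def by (rule CollectI, rule exI[of _ 0], rule exI[of _ 1]) simp
  have cap: "\<And>x. x \<in> J \<Longrightarrow> x \<in> I \<Longrightarrow> x \<in> lprinc a" using N(2) unfolding J_def I_def by blast
  have sum: "\<And>m. \<exists>j\<in>J. \<exists>i\<in>I. m = j + i"
  proof -
    fix m
    obtain y where y: "z ^ N * (m - z ^ N * y) \<in> lprinc a" using N(3) by blast
    have "m - z ^ N * y \<in> J" using y unfolding J_def by blast
    moreover have "z ^ N * y \<in> I" unfolding I_def by (rule CollectI, rule exI[of _ y], rule exI[of _ 0]) simp
    ultimately show "\<exists>j\<in>J. \<exists>i\<in>I. m = j + i" by force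
  qed
  consider (A) "\<exists>x0. x0 \<in> J \<and> x0 \<notin> lprinc a \<and> (\<exists>x1. x1 \<notin> J)" | (B) "J \<subseteq> lprinc a" | (C) "J = UNIV"
    by blast
  then show ?thesis
  proof cases
    case A
    then obtain x0 x1 where "x0 \<in> J" "x0 \<notin> lprinc a" "x1 \<notin> J" by blast
    then have "c_reducible a" using decomp_c_red[OF a0 JL IL aJ aI cap sum] by blast
    then show ?thesis by blast
  next
    case B
    then have "\<forall>x. z ^ N * x \<in> lprinc a \<longrightarrow> x \<in> lprinc a" unfolding J_def by blast
    then show ?thesis using N by blast
  next
    case C
    then have "z ^ N * 1 \<in> lprinc a" unfolding J_def by blast
    then show ?thesis using N(1) by auto
  qed
qed

lemma SL:
  assumes b'irr: "irreducible_elem (b'::'a)" and cirr: "irreducible_elem c"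
    and XL: "left_ideal X" and capc: "\<And>x. x \<in> X \<Longrightarrow> x * y \<in> lprinc b' \<Longrightarrow> x \<in> lprinc c"
    and x0X: "x0 \<in> X" and x0c: "x0 \<notin> lprinc c"
  shows "similar b' c"
proof -
  have "x0 * y \<notin> lprinc b'" using capc x0X x0c by blast
  then obtain \<mu> \<nu> where mn: "1 = \<mu> * (x0 * y) + \<nu> * b'" using irr_max[OF b'irr] by blast
  define \<xi> where "\<xi> = \<mu> * x0"
  have xiX: "\<xi> \<in> X" unfolding \<xi>_def using left_idealD(4)[OF XL x0X] .
  have KY: "1 - \<xi> * y = \<nu> * b'" using mn unfolding \<xi>_def by (simp add: mult.assoc algebra_simps)
  have F: "x - x * y * \<xi> \<in> lprinc c" if xX: "x \<in> X" for x
  proof (rule capc)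
    have "(x * y) * \<xi> \<in> X" by (rule left_idealD(4)[OF XL xiX])
    then show "x - x * y * \<xi> \<in> X" using left_ideal_diff[OF XL xX] by blast
    have "(x - x * y * \<xi>) * y = (x * y) * (1 - \<xi> * y)" by (simp add: algebra_simps)
    also have "\<dots> = (x * y * \<nu>) * b'" by (simp add: KY mult.assoc)
    finally show "(x - x * y * \<xi>) * y \<in> lprinc b'" by (rule lprincI)
  qed
  have G: "b' * \<xi> \<in> lprinc c"
  proof (rule capc)
    show "b' * \<xi> \<in> X" using left_idealD(4)[OF XL xiX] .
    have "(b' * \<xi>) * y = b' - b' * (1 - \<xi> * y)" by (simp add: algebra_simps)
    also have "\<dots> = (1 - b' * \<nu>) * b'" by (simp add: KY algebra_simps)
    finally show "(b' * \<xi>) * y \<in> lprinc b'" by (rule lprincI)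
  qed
  show ?thesis unfolding similar_def
  proof (intro exI[of _ "\<lambda>x. x * \<xi>"] conjI allI)
    fix x y show "(x + y) * \<xi> = x * \<xi> + y * \<xi>" by (simp add: distrib_right)
  next
    fix r x show "(r * x) * \<xi> = r * (x * \<xi>)" by (simp add: mult.assoc)
  next
    fix x show "(x * \<xi> \<in> lprinc c) = (x \<in> lprinc b')"
    proof
      assume xc: "x * \<xi> \<in> lprinc c"
      show "x \<in> lprinc b'"
      proof (rule ccontr)
        assume "x \<notin> lprinc b'"
        then obtain \<mu>' \<nu>' where mn': "1 = \<mu>' * x + \<nu>' * b'" using irr_max[OF b'irr] by blast
        have "\<xi> = (\<mu>' * x + \<nu>' * b') * \<xi>" by (simp add: mn'[symmetric])
        also have "\<dots> = \<mu>' * (x * \<xi>) + \<nu>' * (b' * \<xi>)" by (simp add: distrib_right mult.assoc)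
        finally have eqx: "\<xi> = \<mu>' * (x * \<xi>) + \<nu>' * (b' * \<xi>)" .
        have xic: "\<xi> \<in> lprinc c" by (subst eqx) (rule lprinc_add[OF lprinc_mult[OF xc] lprinc_mult[OF G]])
        have "x0 * y * \<xi> \<in> lprinc c" by (rule lprinc_mult[OF xic])
        then have "(x0 - x0 * y * \<xi>) + x0 * y * \<xi> \<in> lprinc c" using F[OF x0X] lprinc_add by blast
        then show False using x0c by simp
      qed
    next
      assume "x \<in> lprinc b'"
      then obtain k where "x = k * b'" by (auto simp: lprinc_iff)
      then show "x * \<xi> \<in> lprinc c" using lprinc_mult[OF G] by (simp add: mult.assoc)
    qed
  next
    fix y'
    obtain \<rho> \<tau> where rt: "1 = \<rho> * x0 + \<tau> * c" using irr_max[OF cirr x0c] by blast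
    obtain \<sigma> where sg: "x0 - x0 * y * \<xi> = \<sigma> * c" using F[OF x0X] by (auto simp: lprinc_iff)
    have "x0 = (x0 - x0 * y * \<xi>) + x0 * y * \<xi>" by simp
    also have "\<dots> = \<sigma> * c + x0 * y * \<xi>" by (simp only: sg)
    finally have x0e: "x0 = \<sigma> * c + x0 * y * \<xi>" .
    have "y' = y' * (\<rho> * x0 + \<tau> * c)" by (simp add: rt[symmetric])
    also have "\<dots> = y' * \<rho> * x0 + y' * \<tau> * c" by (simp add: distrib_left mult.assoc)
    also have "y' * \<rho> * x0 = y' * \<rho> * (\<sigma> * c + x0 * y * \<xi>)" by (subst x0e[symmetric]) (rule refl)
    finally have yeq: "y' = y' * \<rho> * (\<sigma> * c + x0 * y * \<xi>) + y' * \<tau> * c" .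
    have "y' - (y' * \<rho> * x0 * y) * \<xi> = (y' * \<rho> * (\<sigma> * c + x0 * y * \<xi>) + y' * \<tau> * c) - (y' * \<rho> * x0 * y) * \<xi>"
      using yeq by (rule arg_cong[where f="\<lambda>t. t - (y' * \<rho> * x0 * y) * \<xi>"])
    also have "\<dots> = (y' * \<rho> * \<sigma> + y' * \<tau>) * c" by (simp add: algebra_simps)
    finally have "y' - (y' * \<rho> * x0 * y) * \<xi> = (y' * \<rho> * \<sigma> + y' * \<tau>) * c" .
    then show "\<exists>x. y' - x * \<xi> \<in> lprinc c" using lprincI by blast
  qed
qed

lemma Wlem:
  assumes b'irr: "irreducible_elem (b'::'a)" and cirr: "irreducible_elem c"
    and Wc: "\<And>x. (\<forall>y. x * y \<in> lprinc b') \<Longrightarrow> x \<in> lprinc c"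
    and wW: "\<forall>y. w * y \<in> lprinc b'" and w0: "w \<noteq> 0"
  shows "similar b' c"
proof (rule ccontr)
  assume ns: "\<not> similar b' c"
  define S where "S = {X. left_ideal X \<and> w \<in> X \<and> \<not> X \<subseteq> lprinc c}"
  have "1 \<notin> lprinc c" using cirr unit_iff_l unfolding irreducible_elem_def by blast
  then have "UNIV \<in> S" unfolding S_def using left_ideal_UNIV by blast
  then have ne: "S \<noteq> {}" by blast
  have SX: "\<And>X. X \<in> S \<Longrightarrow> left_ideal X \<and> w \<in> X" unfolding S_def by blast
  obtain X0 where X0: "X0 \<in> S" "\<forall>Y\<in>S. Y \<subseteq> X0 \<longrightarrow> Y = X0"
    using ldcc[OF w0 ne SX] by blast
  have X0': "left_ideal X0 \<and> w \<in> X0 \<and> \<not> X0 \<subseteq> lprinc c" using X0(1) unfolding S_def by (rule CollectD)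
  then have X0L: "left_ideal X0" and wX0: "w \<in> X0" and X0c: "\<not> X0 \<subseteq> lprinc c" by simp_all
  have sub: "X0 \<subseteq> {x. x * y \<in> lprinc b'}" for y
  proof -
    let ?K = "{x. x * y \<in> lprinc b'}"
    have L: "left_ideal (X0 \<inter> ?K)" using left_ideal_Int[OF X0L K_left_ideal] .
    have w: "w \<in> X0 \<inter> ?K" using wX0 wW by blast
    have nc: "\<not> X0 \<inter> ?K \<subseteq> lprinc c"
    proof
      assume cap: "X0 \<inter> ?K \<subseteq> lprinc c"
      obtain x0 where "x0 \<in> X0" "x0 \<notin> lprinc c" using X0c by blast
      then have "similar b' c" using SL[OF b'irr cirr X0L, of y x0] cap by blast
      then show False using ns by blast
    qed
    have inS: "X0 \<inter> ?K \<in> S" unfolding S_def mem_Collect_eq using L w nc by (intro conjI)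
    have "X0 \<inter> ?K \<subseteq> X0" by (rule Int_lower1)
    then have "X0 \<inter> ?K = X0" using X0(2) inS by blast
    then show ?thesis by (rule equalityD2[THEN subset_trans]) (rule Int_lower2)
  qed
  have "X0 \<subseteq> lprinc c"
  proof
    fix x assume "x \<in> X0"
    then have "\<forall>y. x * y \<in> lprinc b'" using sub by blast
    then show "x \<in> lprinc c" by (rule Wc)
  qed
  then show False using X0c by blast
qed

lemma power_nz: "(z::'a) \<noteq> 0 \<Longrightarrow> z ^ n \<noteq> 0"
proof (induction n)
  case 0 then show ?case using zero_ne_one' by simp
next
  case (Suc n) then show ?case using nzd by (metis power_Suc)
qed

lemma unit_factor_irr:
  assumes "is_unit (b::'a)" "irreducible_elem c" "a = b * c"
  shows "irreducible_elem a"
  unfolding irreducible_elem_def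
proof (intro conjI allI impI)
  obtain b' where bb: "b * b' = 1" "b' * b = 1" using assms(1) unfolding is_unit_def by blast
  show "\<not> is_unit a"
  proof
    assume "is_unit a"
    moreover have "c = b' * a" using assms(3) bb(2) by (metis mult.assoc mult_1_left)
    ultimately have "is_unit c" using unit_mult assms(1) bb unfolding is_unit_def by blast
    then show False using assms(2) unfolding irreducible_elem_def by blast
  qed
  fix u v assume uv: "a = u * v"
  have ca: "c = b' * a" using assms(3) bb(2) by (metis mult.assoc mult_1_left)
  then have "c = (b' * u) * v" using uv by (simp add: mult.assoc)
  then have "is_unit (b' * u) \<or> is_unit v" using assms(2) unfolding irreducible_elem_def by blast
  moreover have "is_unit (b' * u) \<Longrightarrow> is_unit u"
  proof -
    assume "is_unit (b' * u)"
    moreover have "u = b * (b' * u)" using bb by (simp flip: mult.assoc)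
    ultimately show "is_unit u" using unit_mult assms(1) by metis
  qed
  ultimately show "is_unit u \<or> is_unit v" by blast
qed

lemma irr_factor_unit:
  assumes "is_unit (c::'a)" "irreducible_elem b" "a = b * c"
  shows "irreducible_elem a"
  unfolding irreducible_elem_def
proof (intro conjI allI impI)
  obtain c' where cc: "c * c' = 1" "c' * c = 1" using assms(1) unfolding is_unit_def by blast
  show "\<not> is_unit a"
  proof
    assume "is_unit a"
    moreover have "b = a * c'" using assms(3) cc(1) by (metis mult.assoc mult_1_right)
    moreover have "is_unit c'" using cc unfolding is_unit_def by blast
    ultimately have "is_unit b" using unit_mult by blast
    then show False using assms(2) unfolding irreducible_elem_def by blast
  qed
  fix u v assume uv: "a = u * v"
  have ba: "b = a * c'" using assms(3) cc(1) by (metis mult.assoc mult_1_right)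
  then have "b = u * (v * c')" using uv by (simp add: mult.assoc)
  then have "is_unit u \<or> is_unit (v * c')" using assms(2) unfolding irreducible_elem_def by blast
  moreover have "is_unit (v * c') \<Longrightarrow> is_unit v"
  proof -
    assume "is_unit (v * c')"
    moreover have "v = (v * c') * c" using cc by (simp add: mult.assoc)
    ultimately show "is_unit v" using unit_mult assms(1) by metis
  qed
  ultimately show "is_unit u \<or> is_unit v" by blast
qed

lemma main_dir:
  assumes a0: "(a::'a) \<noteq> 0" and rps: "a = r * p * s" and pb: "bounded_elem p" and pu: "\<not> is_unit p"
    and nred: "\<not> c_reducible a"
  shows "irreducible_elem a"
proof (rule ccontr)
  assume nirr: "\<not> irreducible_elem a"
  have r0: "r \<noteq> 0" and p0: "p \<noteq> 0" and s0: "s \<noteq> 0" using a0 rps by auto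
  have au: "\<not> is_unit a"
  proof
    assume "is_unit a"
    then obtain v where v: "a * v = 1" "v * a = 1" unfolding is_unit_def by blast
    have "r * (p * s * v) = 1" using v rps by (simp add: mult.assoc)
    then have "is_unit r" using rinv_unit by blast
    then obtain r' where r': "r' * r = 1" unfolding is_unit_def by blast
    have "(v * r * p) * s = 1" using v rps by (simp add: mult.assoc)
    then have "is_unit s" using rinv_unit by blast
    then obtain s' where s': "s * s' = 1" "is_unit s'" unfolding is_unit_def by blast
    have "is_unit r'" using r' rinv_unit by blast
    have "p = r' * a * s'" using rps r' s' by (simp add: mult.assoc flip: mult.assoc[of r' r])
    then have "is_unit p" using unit_mult \<open>is_unit a\<close> \<open>is_unit r'\<close> s'(2) by metis
    then show False using pu by blast
  qed
  obtain I where I: "two_sided_ideal I" "I \<noteq> {0}" "I \<subseteq> lprinc p" using pb unfolding bounded_elem_def by blast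
  obtain z where z: "z \<noteq> 0" "I = lprinc z" "inv_elem z" using inv_gen[OF I(1) I(2)] by blast
  have zp: "z \<in> lprinc p" using I(3) z(2) lprinc_self by blast
  then obtain t where zt: "z = t * p" by (auto simp: lprinc_iff)
  from fit_cases[OF a0 z(3)] consider (R) "c_reducible a" | (B) "\<exists>N\<ge>1. z ^ N \<in> lprinc a"
    | (Inj) "\<exists>N\<ge>1. (\<forall>x. z ^ N * x \<in> lprinc a \<longrightarrow> x \<in> lprinc a) \<and> (\<forall>m. \<exists>y. z ^ N * (m - z ^ N * y) \<in> lprinc a)"
    by blast
  then show False
  proof cases
    case R then show False using nred by blast
  next
    case Inj
    then obtain N where N: "N \<ge> 1" "\<And>x. z ^ N * x \<in> lprinc a \<Longrightarrow> x \<in> lprinc a" by blast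
    have inj1: "z * x \<in> lprinc a \<Longrightarrow> x \<in> lprinc a" for x
    proof -
      assume "z * x \<in> lprinc a"
      obtain n where n: "N = Suc n" using N(1) by (cases N) auto
      have "z ^ N * x = z ^ n * (z * x)" by (simp only: n power_Suc2 mult.assoc)
      then have "z ^ N * x \<in> lprinc a" using lprinc_mult \<open>z * x \<in> lprinc a\<close> by simp
      then show ?thesis using N(2) by blast
    qed
    have injk: "z ^ k * x \<in> lprinc a \<Longrightarrow> x \<in> lprinc a" for k x
    proof (induction k arbitrary: x)
      case 0 then show ?case by simp
    next
      case (Suc k)
      have "z * (z ^ k * x) \<in> lprinc a" using Suc.prems by (simp add: mult.assoc)
      then show ?case using inj1 Suc.IH by blast
    qed
    obtain N' where N': "N' \<ge> 1" "\<forall>m. \<exists>y. z ^ N' * (m - z ^ N' * y) \<in> lprinc r"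
      using fitting[OF r0 z(3)] by blast
    obtain y where y: "z ^ N' * (1 - z ^ N' * y) \<in> lprinc r" using N'(2) by blast
    have "1 - z ^ N' * y \<in> lprinc r"
    proof -
      obtain k where k: "z ^ N' * (1 - z ^ N' * y) = k * r" using y by (auto simp: lprinc_iff)
      have "z ^ N' * ((1 - z ^ N' * y) * (p * s)) = k * a" using k rps by (simp add: mult.assoc flip: mult.assoc[of "z ^ N'"])
      then have "z ^ N' * ((1 - z ^ N' * y) * (p * s)) \<in> lprinc a" using lprincI by blast
      then have "(1 - z ^ N' * y) * (p * s) \<in> lprinc a" using injk by blast
      then obtain k' where "(1 - z ^ N' * y) * (p * s) = k' * a" by (auto simp: lprinc_iff)
      then have "(1 - z ^ N' * y) * (p * s) = (k' * r) * (p * s)" using rps by (simp add: mult.assoc)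
      moreover have "p * s \<noteq> 0" using p0 s0 nzd by blast
      ultimately have "1 - z ^ N' * y = k' * r" using cancel_r by blast
      then show ?thesis using lprincI by blast
    qed
    then obtain \<beta> where beta: "1 - z ^ N' * y = \<beta> * r" by (auto simp: lprinc_iff)
    obtain n' where n': "N' = Suc n'" using N'(1) by (cases N') auto
    define g where "g = z ^ n' * t"
    have zg: "z ^ N' = g * p" unfolding g_def by (simp only: n' power_Suc2 mult.assoc zt[symmetric])
    obtain g' where g': "g * z ^ N' = z ^ N' * g'" using inv_elemD2[OF inv_elem_power[OF z(3)]] by blast
    have one: "1 = z ^ N' * y + \<beta> * r" using beta by (simp add: algebra_simps eq_diff_eq)
    have "z ^ N' * s = g * p * s" by (simp add: zg)
    also have "\<dots> = g * (z ^ N' * y + \<beta> * r) * p * s" by (simp flip: one)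
    also have "\<dots> = (g * z ^ N') * (y * p * s) + g * \<beta> * (r * p * s)" by (simp add: algebra_simps)
    also have "\<dots> = z ^ N' * (g' * y * p * s) + (g * \<beta>) * a" by (simp add: g' rps mult.assoc)
    finally have "z ^ N' * (s - g' * y * p * s) = (g * \<beta>) * a" by (simp add: right_diff_distrib eq_diff_eq)
    then have "z ^ N' * (s - g' * y * p * s) \<in> lprinc a" using lprincI by blast
    then have "s - g' * y * p * s \<in> lprinc a" using injk by blast
    then obtain \<delta> where "s - g' * y * p * s = \<delta> * a" by (auto simp: lprinc_iff)
    then have "1 * s = ((g' * y + \<delta> * r) * p) * s" using rps by (simp add: algebra_simps eq_diff_eq)
    then have "(g' * y + \<delta> * r) * p = 1" using cancel_r s0 by metis
    then have "is_unit p" using rinv_unit by blast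
    then show False using pu by blast
  next
    case B
    then obtain N where N: "N \<ge> 1" "z ^ N \<in> lprinc a" by blast
    define Q where "Q = z ^ N"
    have Qi: "inv_elem Q" unfolding Q_def using inv_elem_power[OF z(3)] .
    have Q0: "Q \<noteq> 0" unfolding Q_def using power_nz[OF z(1)] .
    have Qa: "Q \<in> lprinc a" unfolding Q_def using N(2) .
    obtain b c where bc: "a = b * c" "irreducible_elem c" using irr_right_factor[OF a0 au] by blast
    have bu: "\<not> is_unit b" using unit_factor_irr bc nirr by blast
    obtain b' c' where bc': "a = b' * c'" "irreducible_elem b'" using irr_left_factor[OF a0 au] by blast
    have cu': "\<not> is_unit c'" using irr_factor_unit bc' nirr by blast
    have cu: "\<not> is_unit c" and bu': "\<not> is_unit b'" using bc(2) bc'(2) unfolding irreducible_elem_def by auto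
    have c'0: "c' \<noteq> 0" using a0 bc' by auto
    have nsim: "\<not> similar b' c"
    proof
      assume "similar b' c"
      then have "c_reducible a" unfolding c_reducible_def using a0 bc bc' bu cu cu' bu' by blast
      then show False using nred by blast
    qed
    define W where "W = {x. \<forall>y. x * y \<in> lprinc b'}"
    have WL: "left_ideal W"
    proof (rule left_idealI)
      show "0 \<in> W" by (simp add: W_def lprinc_0)
    next
      fix x y assume "x \<in> W" "y \<in> W" then show "x + y \<in> W" by (simp add: W_def distrib_right lprinc_add)
    next
      fix x assume "x \<in> W" then show "- x \<in> W" unfolding W_def using left_idealD(3)[OF left_ideal_lprinc] by fastforce
    next
      fix r x assume xW: "x \<in> W" show "r * x \<in> W" unfolding W_def
      proof (rule CollectI, rule allI)
        fix y have "x * y \<in> lprinc b'" using xW unfolding W_def by blast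
        then show "r * x * y \<in> lprinc b'" using lprinc_mult[of "x * y" b' r] by (simp add: mult.assoc)
      qed
    qed
    have WR: "right_ideal W"
    proof (rule right_idealI)
      show "0 \<in> W" by (simp add: W_def lprinc_0)
    next
      fix x y assume "x \<in> W" "y \<in> W" then show "x + y \<in> W" by (simp add: W_def distrib_right lprinc_add)
    next
      fix x assume "x \<in> W" then show "- x \<in> W" unfolding W_def using left_idealD(3)[OF left_ideal_lprinc] by fastforce
    next
      fix r x assume "x \<in> W" then show "x * r \<in> W" by (simp add: W_def mult.assoc)
    qed
    have QW: "Q \<in> W" unfolding W_def
    proof (rule CollectI, rule allI)
      fix y
      obtain y'' where y'': "Q * (y * c') = y'' * Q" using inv_elemD1[OF Qi] by blast
      obtain k where k: "Q = k * a" using Qa by (auto simp: lprinc_iff)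
      have "(Q * y) * c' = Q * (y * c')" by (simp add: mult.assoc)
      also have "\<dots> = y'' * Q" by (rule y'')
      also have "\<dots> = y'' * k * (b' * c')" by (simp add: k bc'(1)[symmetric] mult.assoc)
      finally have "(Q * y) * c' = (y'' * k * b') * c'" by (simp add: mult.assoc)
      then have "Q * y = y'' * k * b'" using cancel_r c'0 by blast
      then show "Q * y \<in> lprinc b'" using lprincI by blast
    qed
    have "W \<noteq> {0}" using QW Q0 by blast
    then obtain w where w: "w \<noteq> 0" "W = lprinc w" "inv_elem w"
      using inv_gen WL WR unfolding two_sided_ideal_def by blast
    have wW: "\<forall>y. w * y \<in> lprinc b'" using w(2) lprinc_self unfolding W_def by blast
    from fit_cases[OF a0 w(3)] consider (R2) "c_reducible a" | (B2) "\<exists>N\<ge>1. w ^ N \<in> lprinc a"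
      | (Inj2) "\<exists>N\<ge>1. (\<forall>x. w ^ N * x \<in> lprinc a \<longrightarrow> x \<in> lprinc a) \<and> (\<forall>m. \<exists>y. w ^ N * (m - w ^ N * y) \<in> lprinc a)"
      by blast
    then show False
    proof cases
      case R2 then show False using nred by blast
    next
      case Inj2
      then obtain M where M: "M \<ge> 1" "\<And>x. w ^ M * x \<in> lprinc a \<Longrightarrow> x \<in> lprinc a" by blast
      obtain m where m: "M = Suc m" using M(1) by (cases M) auto
      obtain v where v: "w = v * b'" using wW[rule_format, of 1] by (auto simp: lprinc_iff)
      have wc': "w * c' = v * a" by (simp add: v bc'(1) mult.assoc)
      have "w ^ M * c' = w ^ m * (w * c')" by (simp only: m power_Suc2 mult.assoc)
      also have "\<dots> = (w ^ m * v) * a" by (simp only: wc' mult.assoc)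
      finally have "w ^ M * c' = (w ^ m * v) * a" .
      then have "c' \<in> lprinc a" using M(2) lprincI by blast
      then obtain k where "c' = k * a" by (auto simp: lprinc_iff)
      then have "1 * c' = (k * b') * c'" using bc'(1) by (simp add: mult.assoc)
      then have "k * b' = 1" using cancel_r c'0 by metis
      then show False using rinv_unit bu' by blast
    next
      case B2
      then obtain M where M: "w ^ M \<in> lprinc a" by blast
      have wMc: "w ^ M \<in> lprinc c" using M bc(1) lprinc_trans[of "w ^ M" a c] by (auto simp: lprinc_iff)
      have wc: "w \<in> lprinc c"
      proof (rule ccontr)
        assume "w \<notin> lprinc c"
        then obtain \<mu> \<nu> where mn: "1 = \<mu> * w + \<nu> * c" using irr_max[OF bc(2)] by blast
        have "\<exists>\<gamma> \<delta>. 1 = \<gamma> * w ^ k + \<delta> * c" for k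
        proof (induction k)
          case 0 then show ?case by (intro exI[of _ 1] exI[of _ 0]) simp
        next
          case (Suc k)
          then obtain \<gamma> \<delta> where gd: "1 = \<gamma> * w ^ k + \<delta> * c" by blast
          obtain \<mu>' where mu': "w ^ k * \<mu> = \<mu>' * w ^ k" using inv_elemD1[OF inv_elem_power[OF w(3)]] by blast
          have "1 = \<gamma> * w ^ k * (\<mu> * w + \<nu> * c) + \<delta> * c" using gd mn by simp
          also have "\<dots> = \<gamma> * (w ^ k * \<mu>) * w + (\<gamma> * w ^ k * \<nu> + \<delta>) * c" by (simp add: algebra_simps)
          also have "\<dots> = (\<gamma> * \<mu>') * w ^ Suc k + (\<gamma> * w ^ k * \<nu> + \<delta>) * c" by (simp add: mu' mult.assoc power_commutes)
          finally show ?case by blast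
        qed
        then obtain \<gamma> \<delta> where "1 = \<gamma> * w ^ M + \<delta> * c" by blast
        then have "1 \<in> lprinc c" using wMc lprinc_mult lprinc_add lprincI by metis
        then show False using cu unit_iff_l by blast
      qed
      have Wc: "x \<in> lprinc c" if "\<forall>y. x * y \<in> lprinc b'" for x
      proof -
        have "x \<in> lprinc w" using that w(2) unfolding W_def by blast
        then show ?thesis using wc lprinc_trans by blast
      qed
      have "similar b' c" using Wlem[OF bc'(2) bc(2) Wc wW w(1)] .
      then show False using nsim by blast
    qed
  qed
qed
end

theorem proposition3p7:
  fixes a :: "'a::ring_1"
  assumes "is_PID TYPE('a)"
    and "a \<noteq> 0"
    and "\<exists>r p s. a = r * p * s \<and> bounded_elem p \<and> \<not> is_unit p"
  shows "c_irreducible a \<longleftrightarrow> irreducible_elem a"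
proof
  assume "c_irreducible a"
  then have nred: "\<not> c_reducible a" unfolding c_irreducible_def .
  obtain r p s where "a = r * p * s" "bounded_elem p" "\<not> is_unit p" using assms(3) by blast
  then show "irreducible_elem a" using main_dir[OF assms(1) assms(2) _ _ _ nred] by blast
next
  assume irr: "irreducible_elem a"
  show "c_irreducible a" unfolding c_irreducible_def c_reducible_def
    using irr unfolding irreducible_elem_def by blast
qed

end
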